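(* Let $q=p^{m_0}$ with $p$ prime, let $L$ be a finite extension of $\mathbb{F}_q((1/\theta))$ with ring of integers $\mathcal O$, and let $\rho$ be a permutation of $\{0,1,2,\ldots\}$. For every nonnegative integer $j$, as functions from $\mathbb{Z}_p$ to $\mathcal O$ we have $$\binom{y}{j}^{\rho_1}=\binom{y}{\rho_\ast j},$$ i.e. $\binom{\rho_\ast^{-1}y}{j}=\binom{y}{\rho_\ast j}$ for all $y\in\mathbb{Z}_p$.
   Context: For $y\in\mathbb{Z}_p$ written $q$-adically as $y=\sum_{j\ge0}c_jq^j$ with $0\le c_j<q$, set $\rho_\ast y:=\sum_{j\ge0}c_jq^{\rho(j)}$; this is a bijection (indeed homeomorphism) of $\mathbb{Z}_p$ stabilizing the nonnegative integers, with inverse $(\rho^{-1})_\ast$. For $y\in\mathbb{Z}_p$ and a nonnegative integer $j$, $\binom{y}{j}\in\mathbb{Z}_p$ is the usual binomial coefficient, viewed in $\mathcal O$ via reduction modulo $p$ (as $\mathbb{F}_p\subset\mathcal O$). For a continuous $f:\mathbb{Z}_p\to\mathcal O$, define $f^{\rho_1}(y):=f(\rho_\ast^{-1}y)$. *)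

theory Defs
  imports Main "HOL-Computational_Algebra.Primes"
begin

text \<open>An element y of Z_p is represented by its q-adic digit sequence c
  (with c i < q for all i), i.e. y = sum of c i * q^i.  This is a bijection
  between such digit sequences and Z_p.\<close>

definition qadic_trunc :: "nat \<Rightarrow> (nat \<Rightarrow> nat) \<Rightarrow> nat \<Rightarrow> nat" where
  "qadic_trunc q c N = (\<Sum>i<N. c i * q ^ i)"

definition nat_digits :: "nat \<Rightarrow> nat \<Rightarrow> nat \<Rightarrow> nat" where
  "nat_digits q n i = (n div q ^ i) mod q"

text \<open>Reduction mod p of the p-adic binomial coefficient binom(y, j), y given by
  digits c: the p-adic binomial coefficient is the p-adic limit of
  binom(y_N, j) for the truncations y_N of y, hence its reduction mod p is the
  eventual value of binom(y_N, j) mod p.  The result lies in {0..p-1} = F_p.\<close>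
definition binom_modp :: "nat \<Rightarrow> nat \<Rightarrow> (nat \<Rightarrow> nat) \<Rightarrow> nat \<Rightarrow> nat" where
  "binom_modp p q c j =
     (THE v. eventually (\<lambda>N. (qadic_trunc q c N choose j) mod p = v) sequentially)"

text \<open>rho_* on digit sequences: the digit at position i moves to position rho i;
  so (rho_* c) (rho i) = c i.  Its inverse (rho^{-1})_* sends c to c o rho.\<close>
definition rho_star_digits :: "(nat \<Rightarrow> nat) \<Rightarrow> (nat \<Rightarrow> nat) \<Rightarrow> (nat \<Rightarrow> nat)" where
  "rho_star_digits \<rho> c = c \<circ> inv \<rho>"

definition rho_star_nat :: "(nat \<Rightarrow> nat) \<Rightarrow> nat \<Rightarrow> nat \<Rightarrow> nat" where
  "rho_star_nat \<rho> q n = (\<Sum>i | nat_digits q n i \<noteq> 0. nat_digits q n i * q ^ \<rho> i)"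

end

theory Submission
  imports Defs "HOL-Number_Theory.Cong"
begin

lemma sum_two_delta:
  fixes A B p i :: nat
  assumes "0 < p"
  shows "(\<Sum>k\<le>i. if k = 0 then A else if k = p then B else 0)
         = A + (if p \<le> i then B else 0)"
proof -
  have "(\<Sum>k\<le>i. if k = 0 then A else if k = p then B else 0)
      = (\<Sum>k\<le>i. (if k = 0 then A else 0) + (if k = p then B else 0))"
    by (intro sum.cong) (use assms in auto)
  also have "\<dots> = A + (if p \<le> i then B else 0)"
    using assms by (auto simp: sum.distrib)
  finally show ?thesis .
qed

lemma choose_p_mult:
  assumes p: "prime p"
  shows "[(p*a) choose i = (if p dvd i then a choose (i div p) else 0)] (mod p)"
proof (induction a arbitrary: i)
  case 0
  have pp: "p > 0" using p prime_gt_0_nat by blast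
  show ?case
  proof (cases "p dvd i")
    case True
    then obtain t where "i = p*t" by blast
    then show ?thesis using pp by (cases t) (auto simp: binomial_eq_0)
  next
    case False
    then have "i \<noteq> 0" by (metis dvd_0_right)
    then show ?thesis using False by (simp add: binomial_eq_0)
  qed
next
  case (Suc a)
  have pp: "p > 0" using p prime_gt_0_nat by blast
  have "(p * Suc a) choose i = (\<Sum>k\<le>i. (p choose k) * ((p*a) choose (i - k)))"
    by (simp add: vandermonde add.commute)
  also have "[\<dots> = (\<Sum>k\<le>i. if k = 0 then (p*a) choose i else if k = p then (p*a) choose (i - p) else 0)] (mod p)"
  proof (rule cong_sum)
    fix k assume "k \<in> {..i}"
    show "[(p choose k) * ((p*a) choose (i - k)) = (if k = 0 then (p*a) choose i else if k = p then (p*a) choose (i - p) else 0)] (mod p)"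
    proof (cases "k = 0 \<or> k = p")
      case True then show ?thesis by auto
    next
      case False
      show ?thesis
      proof (cases "k < p")
        case True
        then have "p dvd (p choose k)" using False p dvd_choose_prime by auto
        then show ?thesis using False by (simp add: cong_0_iff)
      next
        case False2: False
        then show ?thesis using False by (simp add: binomial_eq_0)
      qed
    qed
  qed
  also have "(\<Sum>k\<le>i. if k = 0 then (p*a) choose i else if k = p then (p*a) choose (i - p) else 0)
      = ((p*a) choose i) + (if p \<le> i then (p*a) choose (i - p) else 0)"
    using sum_two_delta[OF pp, where A="(p*a) choose i" and B="(p*a) choose (i-p)" and i=i] by simp
  also have "[\<dots> = (if p dvd i then a choose (i div p) else 0) + (if p \<le> i then (if p dvd (i-p) then a choose ((i-p) div p) else 0) else 0)] (mod p)"
    using Suc.IH by (intro cong_add) auto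
  also have "(if p dvd i then a choose (i div p) else 0) + (if p \<le> i then (if p dvd (i-p) then a choose ((i-p) div p) else 0) else 0)
      = (if p dvd i then Suc a choose (i div p) else 0)"
  proof (cases "p dvd i")
    case True
    then obtain t where t: "i = p*t" by blast
    show ?thesis
    proof (cases t)
      case 0 then show ?thesis using t pp by simp
    next
      case (Suc t')
      have "i - p = p * t'" using t Suc by (simp add: algebra_simps)
      then show ?thesis using t Suc pp by simp
    qed
  next
    case False
    have "p \<le> i \<Longrightarrow> \<not> p dvd (i - p)" using False
      by (metis dvd_add_right_iff dvd_refl le_add_diff_inverse)
    then show ?thesis using False by auto
  qed
  finally show ?case .
qed

lemma choose_pm_mult:
  assumes p: "prime p"
  shows "[(p^m*a) choose i = (if p^m dvd i then a choose (i div p^m) else 0)] (mod p)"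
proof (induction m arbitrary: a i)
  case 0
  then show ?case by simp
next
  case (Suc m)
  have pp: "p > 0" using p prime_gt_0_nat by blast
  have "(p^Suc m*a) choose i = (p^m*(p*a)) choose i" by (simp add: ac_simps)
  also have "[\<dots> = (if p^m dvd i then (p*a) choose (i div p^m) else 0)] (mod p)"
    by (rule Suc.IH)
  also have "[(if p^m dvd i then (p*a) choose (i div p^m) else 0) = (if p^m dvd i then (if p dvd (i div p^m) then a choose (i div p^m div p) else 0) else 0)] (mod p)"
    using choose_p_mult[OF p, of a "i div p^m"] by (cases "p^m dvd i") auto
  also have "(if p^m dvd i then (if p dvd (i div p^m) then a choose (i div p^m div p) else 0) else 0)
     = (if p^Suc m dvd i then a choose (i div p^Suc m) else 0)"
  proof (cases "p^m dvd i")
    case True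
    then obtain t where t: "i = p^m * t" by blast
    have pm: "p^m > 0" using pp by simp
    have "p^Suc m dvd i \<longleftrightarrow> p dvd t" using t pm pp
      by (simp add: mult.commute[of p] mult_dvd_mono)
    moreover have "i div p^Suc m = i div p^m div p" by (simp add: div_mult2_eq mult.commute[of p])
    ultimately show ?thesis using True t pm by simp
  next
    case False
    then have "\<not> p^Suc m dvd i" using dvd_trans[of "p^m" "p^Suc m" i] by (auto simp: power_Suc)
    then show ?thesis using False by simp
  qed
  finally show ?case .
qed

lemma lucas_step:
  assumes p: "prime p" and q: "q = p^m" and r: "r < q" and s: "s < q"
  shows "[(q*a + r) choose (q*b + s) = (a choose b) * (r choose s)] (mod p)"
proof -
  have qp: "q > 0" using q p prime_gt_0_nat by simp
  have "(q*a + r) choose (q*b + s) = (\<Sum>k\<le>q*b+s. ((q*a) choose k) * (r choose (q*b + s - k)))"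
    by (simp add: vandermonde)
  also have "[\<dots> = (\<Sum>k\<le>q*b+s. if k = q*b then (a choose b) * (r choose s) else 0)] (mod p)"
  proof (rule cong_sum)
    fix k assume k: "k \<in> {..q*b+s}"
    show "[((q*a) choose k) * (r choose (q*b + s - k)) = (if k = q*b then (a choose b) * (r choose s) else 0)] (mod p)"
    proof (cases "k = q*b")
      case True
      have "[(q*a) choose (q*b) = a choose b] (mod p)"
        using choose_pm_mult[OF p, of m a "q*b"] q qp p prime_gt_0_nat by simp
      then show ?thesis using True by (simp add: cong_mult)
    next
      case False
      show ?thesis
      proof (cases "q dvd k")
        case True
        then obtain t where t: "k = q*t" by blast
        have "t \<noteq> b" using t False by auto
        moreover have "\<not> t > b"
        proof
          assume "t > b"
          then have "q*t \<ge> q*(b+1)" using qp by (intro mult_le_mono2) simp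
          then show False using k t s by auto
        qed
        ultimately have "t < b" by simp
        then have "q*t + q \<le> q*b" using qp
          by (metis Suc_leI mult_Suc_right mult_le_mono2 add.commute)
        then have "r < q*b + s - k" using t r by simp
        then show ?thesis using False by (simp add: binomial_eq_0)
      next
        case False2: False
        have "[(q*a) choose k = 0] (mod p)"
          using choose_pm_mult[OF p, of m a k] q False2 by simp
        then have "[((q*a) choose k) * (r choose (q*b + s - k)) = 0 * (r choose (q*b + s - k))] (mod p)"
          by (rule cong_scalar_right)
        then show ?thesis using False by simp
      qed
    qed
  qed
  also have "(\<Sum>k\<le>q*b+s. if k = q*b then (a choose b) * (r choose s) else 0) = (a choose b) * (r choose s)"
    by simp
  finally show ?thesis .
qed

lemma trunc_Suc:
  "qadic_trunc q c (Suc N) = c 0 + q * qadic_trunc q (c \<circ> Suc) N"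
  unfolding qadic_trunc_def sum.lessThan_Suc_shift
  by (simp add: sum_distrib_left ac_simps del: sum.lessThan_Suc)

lemma digits_Suc:
  "nat_digits q j (Suc i) = nat_digits q (j div q) i"
  unfolding nat_digits_def by (simp add: div_mult2_eq)

lemma digits_0: "nat_digits q j 0 = j mod q"
  unfolding nat_digits_def by simp

lemma lucas_digits:
  assumes p: "prime p" and q: "q = p^m"
  shows "(\<forall>i. c i < q) \<Longrightarrow> j < q^N \<Longrightarrow>
    [qadic_trunc q c N choose j = (\<Prod>i<N. c i choose nat_digits q j i)] (mod p)"
proof (induction N arbitrary: c j)
  case 0
  then show ?case by (simp add: qadic_trunc_def)
next
  case (Suc N)
  have qp: "q > 0" using q p prime_gt_0_nat by simp
  have jd: "j div q < q^N" using Suc.prems(2)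
    by (intro less_mult_imp_div_less) (simp add: ac_simps)
  have IH: "[qadic_trunc q (c \<circ> Suc) N choose (j div q)
      = (\<Prod>i<N. (c \<circ> Suc) i choose nat_digits q (j div q) i)] (mod p)"
    using Suc.IH[of "c \<circ> Suc" "j div q"] Suc.prems jd by (simp add: o_def)
  have "qadic_trunc q c (Suc N) choose j
      = (q * qadic_trunc q (c \<circ> Suc) N + c 0) choose (q * (j div q) + j mod q)"
    by (simp add: trunc_Suc add.commute)
  also have "[(q * qadic_trunc q (c \<circ> Suc) N + c 0) choose (q * (j div q) + j mod q)
      = (qadic_trunc q (c \<circ> Suc) N choose (j div q)) * (c 0 choose (j mod q))] (mod p)"
    using lucas_step[OF p q, of "c 0" "j mod q" "qadic_trunc q (c \<circ> Suc) N" "j div q"] Suc.prems qp by simp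
  also have "[(qadic_trunc q (c \<circ> Suc) N choose (j div q)) * (c 0 choose (j mod q))
      = (\<Prod>i<N. (c \<circ> Suc) i choose nat_digits q (j div q) i) * (c 0 choose (j mod q))] (mod p)"
    using IH by (rule cong_scalar_right)
  also have "(\<Prod>i<N. (c \<circ> Suc) i choose nat_digits q (j div q) i) * (c 0 choose (j mod q))
      = (\<Prod>i<Suc N. c i choose nat_digits q j i)"
    unfolding prod.lessThan_Suc_shift by (simp add: digits_Suc digits_0 del: prod.lessThan_Suc)
  finally show ?case .
qed

lemma digits_trunc:
  assumes "q > 0" "\<forall>k. e k < q"
  shows "nat_digits q (qadic_trunc q e M) i = (if i < M then e i else 0)"
  using assms(2)
proof (induction M arbitrary: e i)
  case 0
  then show ?case by (simp add: qadic_trunc_def nat_digits_def)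
next
  case (Suc M)
  have d: "(e 0 + q * y) div q = y" for y using assms(1) Suc.prems by simp
  show ?case
  proof (cases i)
    case 0
    then show ?thesis using Suc.prems by (simp add: trunc_Suc digits_0)
  next
    case (Suc i')
    have "nat_digits q (qadic_trunc q e (Suc M)) i = nat_digits q (qadic_trunc q (e \<circ> Suc) M) i'"
      using Suc by (simp add: trunc_Suc digits_Suc d)
    also have "\<dots> = (if i' < M then e (Suc i') else 0)"
      using Suc.IH[of "e \<circ> Suc" i'] Suc.prems by (simp add: o_def)
    finally show ?thesis using Suc by simp
  qed
qed

lemma binom_modp_eq:
  assumes p: "prime p" and q: "q = p^m" and m: "m \<ge> 1" and c: "\<forall>i. c i < q"
  shows "binom_modp p q c j = (\<Prod>i\<in>{i. nat_digits q j i \<noteq> 0}. c i choose nat_digits q j i) mod p"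
proof -
  have p2: "p \<ge> 2" using p prime_ge_2_nat by blast
  have "p^1 \<le> p^m" using m p2 by (intro power_increasing) auto
  then have q2: "q \<ge> 2" using q p2 by simp
  have qpow: "j < q^N" if "N \<ge> j" for N
  proof -
    have "j < 2^j" by (rule less_exp)
    also have "\<dots> \<le> q^j" using q2 by (rule power_mono) simp
    also have "\<dots> \<le> q^N" using q2 that by (intro power_increasing) auto
    finally show ?thesis .
  qed
  have dz: "nat_digits q j i = 0" if "i \<ge> j" for i
    using qpow[OF that] unfolding nat_digits_def by simp
  define S where "S = {i. nat_digits q j i \<noteq> 0}"
  have Ssub: "S \<subseteq> {..<j}" using dz unfolding S_def by (metis (mono_tags) lessThan_iff mem_Collect_eq not_le subsetI)
  define V where "V = (\<Prod>i\<in>S. c i choose nat_digits q j i) mod p"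
  have ev: "(qadic_trunc q c N choose j) mod p = V" if N: "N \<ge> j" for N
  proof -
    have "[qadic_trunc q c N choose j = (\<Prod>i<N. c i choose nat_digits q j i)] (mod p)"
      using lucas_digits[OF p q] c qpow[OF N] by blast
    moreover have "(\<Prod>i<N. c i choose nat_digits q j i) = (\<Prod>i\<in>S. c i choose nat_digits q j i)"
      using Ssub N by (intro prod.mono_neutral_right) (auto simp: S_def)
    ultimately show ?thesis unfolding V_def cong_def by simp
  qed
  have "binom_modp p q c j = V"
    unfolding binom_modp_def
  proof (rule the_equality)
    show "\<forall>\<^sub>F N in sequentially. (qadic_trunc q c N choose j) mod p = V"
      using ev by (auto simp: eventually_sequentially)
  next
    fix v assume "\<forall>\<^sub>F N in sequentially. (qadic_trunc q c N choose j) mod p = v"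
    then obtain N1 where "\<And>N. N \<ge> N1 \<Longrightarrow> (qadic_trunc q c N choose j) mod p = v"
      by (auto simp: eventually_sequentially)
    from this[of "max N1 j"] ev[of "max N1 j"] show "v = V" by simp
  qed
  then show ?thesis unfolding V_def S_def .
qed

lemma finite_digits:
  assumes "q \<ge> 2"
  shows "finite {i. nat_digits q j i \<noteq> 0}"
proof -
  have qpow: "j < q^N" if "N \<ge> j" for N
  proof -
    have "j < 2^j" by (rule less_exp)
    also have "\<dots> \<le> q^j" using assms by (rule power_mono) simp
    also have "\<dots> \<le> q^N" using assms that by (intro power_increasing) auto
    finally show ?thesis .
  qed
  have dz: "nat_digits q j i = 0" if "i \<ge> j" for i
    using qpow[OF that] unfolding nat_digits_def by simp
  have "{i. nat_digits q j i \<noteq> 0} \<subseteq> {..<j}" using dz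
    by (metis (mono_tags) lessThan_iff mem_Collect_eq not_le subsetI)
  then show ?thesis using finite_subset by blast
qed

theorem proposition7p3:
  fixes p m0 j :: nat and \<rho> c :: "nat \<Rightarrow> nat"
  assumes "prime p" and "m0 \<ge> 1" and "bij \<rho>"
    and "\<forall>i. c i < p ^ m0"
  shows "binom_modp p (p ^ m0) (rho_star_digits (inv \<rho>) c) j
       = binom_modp p (p ^ m0) c (rho_star_nat \<rho> (p ^ m0) j)"
proof -
  define q where "q = p ^ m0"
  have p2: "p \<ge> 2" using assms(1) prime_ge_2_nat by blast
  have "p^1 \<le> p^m0" using assms(2) p2 by (intro power_increasing) auto
  then have q2: "q \<ge> 2" using q_def p2 by simp
  have inj: "inj \<rho>" using assms(3) bij_is_inj by blast
  define d where "d = nat_digits q j"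
  define S where "S = {i. d i \<noteq> 0}"
  have finS: "finite S" unfolding S_def d_def using finite_digits[OF q2] .
  have cq: "\<forall>i. c i < q" using assms(4) q_def by simp
  have crq: "\<forall>i. (c \<circ> \<rho>) i < q" using cq by simp
  have rs: "rho_star_digits (inv \<rho>) c = c \<circ> \<rho>"
    unfolding rho_star_digits_def using inv_inv_eq[OF assms(3)] by simp
  have L: "binom_modp p q (c \<circ> \<rho>) j = (\<Prod>i\<in>S. c (\<rho> i) choose d i) mod p"
    using binom_modp_eq[OF assms(1) q_def assms(2) crq, of j] unfolding S_def d_def by (simp add: o_def)
  define J where "J = rho_star_nat \<rho> q j"
  have Jdef: "J = (\<Sum>i\<in>S. d i * q ^ \<rho> i)"
    unfolding J_def rho_star_nat_def S_def d_def ..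
  have "finite (\<rho> ` S)" using finS by simp
  then have "\<rho> ` S \<subseteq> {..<Suc (Max (\<rho> ` S))}"
    by (auto simp: le_imp_less_Suc)
  then obtain M where M: "\<rho> ` S \<subseteq> {..<M}" by blast
  define e where "e k = (if k \<in> \<rho> ` S then d (inv \<rho> k) else 0)" for k
  have eS: "e (\<rho> i) = d i" if "i \<in> S" for i
    using that inj unfolding e_def by (simp add: inv_f_f)
  have dq: "d i < q" for i unfolding d_def nat_digits_def using q2 by simp
  have eq: "\<forall>k. e k < q" unfolding e_def using dq q2 by simp
  have "qadic_trunc q e M = (\<Sum>k\<in>\<rho> ` S. e k * q^k)"
    unfolding qadic_trunc_def using M by (intro sum.mono_neutral_right) (auto simp: e_def)
  also have "\<dots> = (\<Sum>i\<in>S. e (\<rho> i) * q^(\<rho> i))"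
    using inj by (subst sum.reindex) (auto intro: inj_on_subset)
  also have "\<dots> = J" unfolding Jdef using eS by (intro sum.cong) auto
  finally have eJ: "qadic_trunc q e M = J" .
  have dJ: "nat_digits q J k = e k" for k
  proof -
    have "nat_digits q J k = (if k < M then e k else 0)"
      using digits_trunc[of q e M k] eJ eq q2 by simp
    moreover have "k \<ge> M \<Longrightarrow> e k = 0" using M unfolding e_def by auto
    ultimately show ?thesis by (cases "k < M") auto
  qed
  have SJ: "{k. nat_digits q J k \<noteq> 0} = \<rho> ` S"
  proof
    show "{k. nat_digits q J k \<noteq> 0} \<subseteq> \<rho> ` S" unfolding dJ e_def by auto
    show "\<rho> ` S \<subseteq> {k. nat_digits q J k \<noteq> 0}" using eS unfolding dJ S_def by auto
  qed
  have R: "binom_modp p q c J = (\<Prod>k\<in>\<rho> ` S. c k choose e k) mod p"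
    using binom_modp_eq[OF assms(1) q_def assms(2) cq, of J] unfolding SJ by (simp add: dJ)
  also have "\<dots> = (\<Prod>i\<in>S. c (\<rho> i) choose e (\<rho> i)) mod p"
    using inj by (subst prod.reindex) (auto intro: inj_on_subset)
  also have "\<dots> = (\<Prod>i\<in>S. c (\<rho> i) choose d i) mod p"
    using eS by (metis (no_types, lifting) prod.cong)
  finally show ?thesis using L rs unfolding q_def J_def by simp
qed

end
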